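(* For $i\in\{1,2\}$, let $G_i$ be a graph with maximum degree $\Delta_i$ and degeneracy $d_i$ that contains $K_{s_i,t_i}$ as a subgraph, where $1\leq s_i\leq t_i$. Then $$\max\{d_1d_2,\ \min\{s_1t_2,s_2t_1\},\ \min\{\Delta_1,\Delta_2\}\}\ \leq\ \operatorname{degen}(G_1\times G_2)\ \leq\ \min\{d_1\Delta_2,\ d_2\Delta_1\}.$$
   Context: The degeneracy $\operatorname{degen}(G)$ of a graph $G$ is the minimum integer $d$ such that every subgraph of $G$ has minimum degree at most $d$. The direct product $G_1 \times G_2$ has vertex set $V(G_1)\times V(G_2)$, with $(a,v)(b,u)$ an edge iff $ab\in E(G_1)$ and $uv\in E(G_2)$. *)

theory Defs
  imports Main
begin

definition graph :: "'a set \<Rightarrow> ('a \<Rightarrow> 'a \<Rightarrow> bool) \<Rightarrow> bool" where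
  "graph V E \<longleftrightarrow> finite V \<and> (\<forall>x y. E x y \<longrightarrow> x \<in> V \<and> y \<in> V)
     \<and> (\<forall>x y. E x y \<longrightarrow> E y x) \<and> (\<forall>x. \<not> E x x)"

definition degree :: "'a set \<Rightarrow> ('a \<Rightarrow> 'a \<Rightarrow> bool) \<Rightarrow> 'a \<Rightarrow> nat" where
  "degree V E x = card {y \<in> V. E x y}"

definition max_degree :: "'a set \<Rightarrow> ('a \<Rightarrow> 'a \<Rightarrow> bool) \<Rightarrow> nat" where
  "max_degree V E = Max (degree V E ` V)"

definition min_degree :: "'a set \<Rightarrow> ('a \<Rightarrow> 'a \<Rightarrow> bool) \<Rightarrow> nat" where
  "min_degree V E = Min (degree V E ` V)"

definition subgraph :: "'a set \<Rightarrow> ('a \<Rightarrow> 'a \<Rightarrow> bool) \<Rightarrow> 'a set \<Rightarrow> ('a \<Rightarrow> 'a \<Rightarrow> bool) \<Rightarrow> bool" where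
  "subgraph W F V E \<longleftrightarrow> graph W F \<and> W \<subseteq> V \<and> (\<forall>x y. F x y \<longrightarrow> E x y)"

definition degeneracy :: "'a set \<Rightarrow> ('a \<Rightarrow> 'a \<Rightarrow> bool) \<Rightarrow> nat" where
  "degeneracy V E = (LEAST d. \<forall>W F. subgraph W F V E \<and> W \<noteq> {} \<longrightarrow> min_degree W F \<le> d)"

definition contains_Kst :: "'a set \<Rightarrow> ('a \<Rightarrow> 'a \<Rightarrow> bool) \<Rightarrow> nat \<Rightarrow> nat \<Rightarrow> bool" where
  "contains_Kst V E s t \<longleftrightarrow> (\<exists>A B. A \<subseteq> V \<and> B \<subseteq> V \<and> A \<inter> B = {} \<and> card A = s \<and> card B = t
      \<and> (\<forall>a\<in>A. \<forall>b\<in>B. E a b))"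

definition dprod_edge :: "('a \<Rightarrow> 'a \<Rightarrow> bool) \<Rightarrow> ('b \<Rightarrow> 'b \<Rightarrow> bool) \<Rightarrow> 'a \<times> 'b \<Rightarrow> 'a \<times> 'b \<Rightarrow> bool" where
  "dprod_edge E1 E2 p q \<longleftrightarrow> E1 (fst p) (fst q) \<and> E2 (snd p) (snd q)"

end

theory Submission
  imports Defs
begin

definition ind :: "('a \<Rightarrow> 'a \<Rightarrow> bool) \<Rightarrow> 'a set \<Rightarrow> 'a \<Rightarrow> 'a \<Rightarrow> bool" where
  "ind E W = (\<lambda>p q. E p q \<and> p \<in> W \<and> q \<in> W)"

lemma ind_sub:
  assumes "graph V E" "W \<subseteq> V"
  shows "subgraph W (ind E W) V E"
  using assms finite_subset unfolding subgraph_def graph_def ind_def by blast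

lemma deg_prop:
  assumes "graph V E" "subgraph W F V E" "W \<noteq> {}"
  shows "min_degree W F \<le> degeneracy V E"
proof -
  let ?P = "\<lambda>d. \<forall>W F. subgraph W F V E \<and> W \<noteq> {} \<longrightarrow> min_degree W F \<le> d"
  have "?P (card V)"
  proof (intro allI impI)
    fix W F assume h: "subgraph W F V E \<and> W \<noteq> {}"
    then have fW: "finite W" and WV: "W \<subseteq> V" and ne: "W \<noteq> {}"
      unfolding subgraph_def graph_def by auto
    obtain x where x: "x \<in> W" using ne by auto
    have "min_degree W F \<le> degree W F x"
      unfolding min_degree_def using fW x by (simp add: Min_le)
    also have "\<dots> \<le> card W" unfolding degree_def using fW by (intro card_mono) auto
    also have "\<dots> \<le> card V" using assms(1) WV unfolding graph_def by (simp add: card_mono)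
    finally show "min_degree W F \<le> card V" .
  qed
  then have "?P (degeneracy V E)" unfolding degeneracy_def by (rule LeastI)
  then show ?thesis using assms by blast
qed

lemma deg_ub:
  assumes "\<And>W F. subgraph W F V E \<Longrightarrow> W \<noteq> {} \<Longrightarrow> min_degree W F \<le> d"
  shows "degeneracy V E \<le> d"
  unfolding degeneracy_def using assms by (intro Least_le) blast

lemma deg_witness:
  assumes "0 < degeneracy V E"
  shows "\<exists>W F. subgraph W F V E \<and> W \<noteq> {} \<and> degeneracy V E \<le> min_degree W F"
proof (rule ccontr)
  assume "\<not> ?thesis"
  then have "\<forall>W F. subgraph W F V E \<and> W \<noteq> {} \<longrightarrow> min_degree W F \<le> degeneracy V E - 1"
    by force
  then have "degeneracy V E \<le> degeneracy V E - 1" by (intro deg_ub) auto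
  then show False using assms by simp
qed

lemma lb_induced:
  assumes "graph V E" "W \<subseteq> V" "W \<noteq> {}" "\<And>x. x \<in> W \<Longrightarrow> k \<le> card {y \<in> W. E x y}"
  shows "k \<le> degeneracy V E"
proof -
  have fW: "finite W" using assms(1,2) finite_subset unfolding graph_def by blast
  have "k \<le> min_degree W (ind E W)"
    unfolding min_degree_def using fW assms(3)
  proof (subst Min_ge_iff)
    show "finite (degree W (ind E W) ` W)" using fW by simp
    show "degree W (ind E W) ` W \<noteq> {}" using assms(3) by simp
    have "\<And>x. x \<in> W \<Longrightarrow> {y \<in> W. ind E W x y} = {y \<in> W. E x y}" unfolding ind_def by auto
    then show "\<forall>a\<in>degree W (ind E W) ` W. k \<le> a" using assms(4) unfolding degree_def by auto
  qed
  also have "\<dots> \<le> degeneracy V E" using deg_prop ind_sub assms by blast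
  finally show ?thesis .
qed

lemma graph_prod:
  assumes "graph V1 E1" "graph V2 E2"
  shows "graph (V1 \<times> V2) (dprod_edge E1 E2)"
  using assms unfolding graph_def dprod_edge_def by auto

lemma mdeg_ge:
  assumes "graph V E" "x \<in> V"
  shows "degree V E x \<le> max_degree V E"
  using assms unfolding max_degree_def graph_def by auto

lemma ub_fst:
  assumes G1: "graph V1 E1" and G2: "graph V2 E2"
  shows "degeneracy (V1 \<times> V2) (dprod_edge E1 E2) \<le> degeneracy V1 E1 * max_degree V2 E2"
proof (rule deg_ub)
  fix W F assume sub: "subgraph W F (V1 \<times> V2) (dprod_edge E1 E2)" and ne: "W \<noteq> {}"
  have fW: "finite W" and WV: "W \<subseteq> V1 \<times> V2" and FE: "\<And>p q. F p q \<Longrightarrow> dprod_edge E1 E2 p q"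
    using sub unfolding subgraph_def graph_def by auto
  define W1 where "W1 = fst ` W"
  have W1V: "W1 \<subseteq> V1" using WV unfolding W1_def by auto
  have W1ne: "W1 \<noteq> {}" using ne unfolding W1_def by auto
  have fW1: "finite W1" using fW unfolding W1_def by auto
  have "min_degree W1 (ind E1 W1) \<le> degeneracy V1 E1"
    using deg_prop[OF G1 ind_sub[OF G1 W1V] W1ne] .
  moreover obtain x where x: "x \<in> W1" "degree W1 (ind E1 W1) x = min_degree W1 (ind E1 W1)"
    unfolding min_degree_def using fW1 W1ne
    by (metis (mono_tags, lifting) Min_in empty_is_image finite_imageI imageE)
  ultimately have dx: "degree W1 (ind E1 W1) x \<le> degeneracy V1 E1" by simp
  obtain y where xy: "(x, y) \<in> W" using x(1) unfolding W1_def by force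
  have yV: "y \<in> V2" using xy WV by auto
  have fV2: "finite V2" using G2 unfolding graph_def by auto
  have "min_degree W F \<le> degree W F (x, y)"
    unfolding min_degree_def using fW xy by (simp add: Min_le)
  also have "\<dots> \<le> card ({a \<in> W1. ind E1 W1 x a} \<times> {b \<in> V2. E2 y b})"
    unfolding degree_def
  proof (rule card_mono)
    show "finite ({a \<in> W1. ind E1 W1 x a} \<times> {b \<in> V2. E2 y b})" using fW1 fV2 by auto
    show "{ya \<in> W. F (x, y) ya} \<subseteq> {a \<in> W1. ind E1 W1 x a} \<times> {b \<in> V2. E2 y b}"
    proof
      fix q assume q: "q \<in> {ya \<in> W. F (x, y) ya}"
      then have "dprod_edge E1 E2 (x, y) q" using FE by auto
      then show "q \<in> {a \<in> W1. ind E1 W1 x a} \<times> {b \<in> V2. E2 y b}"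
        using q x(1) WV unfolding dprod_edge_def ind_def W1_def by (cases q) force
    qed
  qed
  also have "\<dots> = degree W1 (ind E1 W1) x * degree V2 E2 y"
    unfolding degree_def by (simp add: card_cartesian_product)
  also have "\<dots> \<le> degeneracy V1 E1 * max_degree V2 E2"
    using dx mdeg_ge[OF G2 yV] by (intro mult_mono) auto
  finally show "min_degree W F \<le> degeneracy V1 E1 * max_degree V2 E2" .
qed

lemma ub_snd:
  assumes G1: "graph V1 E1" and G2: "graph V2 E2"
  shows "degeneracy (V1 \<times> V2) (dprod_edge E1 E2) \<le> degeneracy V2 E2 * max_degree V1 E1"
proof (rule deg_ub)
  fix W F assume sub: "subgraph W F (V1 \<times> V2) (dprod_edge E1 E2)" and ne: "W \<noteq> {}"
  have fW: "finite W" and WV: "W \<subseteq> V1 \<times> V2" and FE: "\<And>p q. F p q \<Longrightarrow> dprod_edge E1 E2 p q"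
    using sub unfolding subgraph_def graph_def by auto
  define W2 where "W2 = snd ` W"
  have W2V: "W2 \<subseteq> V2" using WV unfolding W2_def by auto
  have W2ne: "W2 \<noteq> {}" using ne unfolding W2_def by auto
  have fW2: "finite W2" using fW unfolding W2_def by auto
  have "min_degree W2 (ind E2 W2) \<le> degeneracy V2 E2"
    using deg_prop[OF G2 ind_sub[OF G2 W2V] W2ne] .
  moreover obtain y where y: "y \<in> W2" "degree W2 (ind E2 W2) y = min_degree W2 (ind E2 W2)"
    unfolding min_degree_def using fW2 W2ne
    by (metis (mono_tags, lifting) Min_in empty_is_image finite_imageI imageE)
  ultimately have dy: "degree W2 (ind E2 W2) y \<le> degeneracy V2 E2" by simp
  obtain x where xy: "(x, y) \<in> W" using y(1) unfolding W2_def by force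
  have xV: "x \<in> V1" using xy WV by auto
  have fV1: "finite V1" using G1 unfolding graph_def by auto
  have "min_degree W F \<le> degree W F (x, y)"
    unfolding min_degree_def using fW xy by (simp add: Min_le)
  also have "\<dots> \<le> card ({a \<in> V1. E1 x a} \<times> {b \<in> W2. ind E2 W2 y b})"
    unfolding degree_def
  proof (rule card_mono)
    show "finite ({a \<in> V1. E1 x a} \<times> {b \<in> W2. ind E2 W2 y b})" using fW2 fV1 by auto
    show "{ya \<in> W. F (x, y) ya} \<subseteq> {a \<in> V1. E1 x a} \<times> {b \<in> W2. ind E2 W2 y b}"
    proof
      fix q assume q: "q \<in> {ya \<in> W. F (x, y) ya}"
      then have "dprod_edge E1 E2 (x, y) q" using FE by auto
      then show "q \<in> {a \<in> V1. E1 x a} \<times> {b \<in> W2. ind E2 W2 y b}"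
        using q y(1) WV unfolding dprod_edge_def ind_def W2_def by (cases q) force
    qed
  qed
  also have "\<dots> = degree V1 E1 x * degree W2 (ind E2 W2) y"
    unfolding degree_def by (simp add: card_cartesian_product)
  also have "\<dots> \<le> degeneracy V2 E2 * max_degree V1 E1"
    using dy mdeg_ge[OF G1 xV] by (metis mult.commute mult_mono zero_le)
  finally show "min_degree W F \<le> degeneracy V2 E2 * max_degree V1 E1" .
qed



lemma lb_prod:
  assumes G1: "graph V1 E1" and G2: "graph V2 E2"
  shows "degeneracy V1 E1 * degeneracy V2 E2 \<le> degeneracy (V1 \<times> V2) (dprod_edge E1 E2)"
proof (cases "degeneracy V1 E1 = 0 \<or> degeneracy V2 E2 = 0")
  case True then show ?thesis by auto
next
  case False
  then obtain W1 F1 W2 F2 where s1: "subgraph W1 F1 V1 E1" "W1 \<noteq> {}" "degeneracy V1 E1 \<le> min_degree W1 F1"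
    and s2: "subgraph W2 F2 V2 E2" "W2 \<noteq> {}" "degeneracy V2 E2 \<le> min_degree W2 F2"
    using deg_witness by (metis neq0_conv)
  have f1: "finite W1" "W1 \<subseteq> V1" "\<And>a b. F1 a b \<Longrightarrow> E1 a b" "\<And>a b. F1 a b \<Longrightarrow> a \<in> W1 \<and> b \<in> W1"
    using s1 unfolding subgraph_def graph_def by auto
  have f2: "finite W2" "W2 \<subseteq> V2" "\<And>a b. F2 a b \<Longrightarrow> E2 a b" "\<And>a b. F2 a b \<Longrightarrow> a \<in> W2 \<and> b \<in> W2"
    using s2 unfolding subgraph_def graph_def by auto
  show ?thesis
  proof (rule lb_induced[OF graph_prod[OF G1 G2]])
    show "W1 \<times> W2 \<subseteq> V1 \<times> V2" using f1 f2 by auto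
    show "W1 \<times> W2 \<noteq> {}" using s1 s2 by auto
    fix p assume p: "p \<in> W1 \<times> W2"
    obtain x y where xy: "p = (x, y)" "x \<in> W1" "y \<in> W2" using p by auto
    have "degeneracy V1 E1 * degeneracy V2 E2 \<le> degree W1 F1 x * degree W2 F2 y"
      using s1(3) s2(3) f1(1) f2(1) xy unfolding min_degree_def
      by (intro mult_mono) (auto intro: order_trans[OF _ Min_le])
    also have "\<dots> = card ({a \<in> W1. F1 x a} \<times> {b \<in> W2. F2 y b})"
      unfolding degree_def by (simp add: card_cartesian_product)
    also have "\<dots> \<le> card {q \<in> W1 \<times> W2. dprod_edge E1 E2 p q}"
      using f1 f2 xy by (intro card_mono) (auto simp: dprod_edge_def)
    finally show "degeneracy V1 E1 * degeneracy V2 E2 \<le> card {q \<in> W1 \<times> W2. dprod_edge E1 E2 p q}" .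
  qed
qed

lemma lb_K:
  assumes G1: "graph V1 E1" and G2: "graph V2 E2"
    and st1: "1 \<le> s1" "s1 \<le> t1" and st2: "1 \<le> s2" "s2 \<le> t2"
    and K1: "contains_Kst V1 E1 s1 t1" and K2: "contains_Kst V2 E2 s2 t2"
  shows "min (s1 * t2) (s2 * t1) \<le> degeneracy (V1 \<times> V2) (dprod_edge E1 E2)"
proof -
  obtain A1 B1 where k1: "A1 \<subseteq> V1" "B1 \<subseteq> V1" "card A1 = s1" "card B1 = t1" "\<forall>a\<in>A1. \<forall>b\<in>B1. E1 a b"
    using K1 unfolding contains_Kst_def by blast
  obtain A2 B2 where k2: "A2 \<subseteq> V2" "B2 \<subseteq> V2" "card A2 = s2" "card B2 = t2" "\<forall>a\<in>A2. \<forall>b\<in>B2. E2 a b"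
    using K2 unfolding contains_Kst_def by blast
  have fin: "finite A1" "finite B1" "finite A2" "finite B2"
    using k1 k2 G1 G2 finite_subset unfolding graph_def by blast+
  have sym1: "\<And>a b. E1 a b \<Longrightarrow> E1 b a" and sym2: "\<And>a b. E2 a b \<Longrightarrow> E2 b a"
    using G1 G2 unfolding graph_def by auto
  have ne: "A1 \<noteq> {}" "B2 \<noteq> {}" using k1 k2 st1 st2 by auto
  let ?W = "A1 \<times> B2 \<union> B1 \<times> A2"
  show ?thesis
  proof (rule lb_induced[OF graph_prod[OF G1 G2]])
    show "?W \<subseteq> V1 \<times> V2" using k1 k2 by auto
    show "?W \<noteq> {}" using ne by auto
    fix p assume p: "p \<in> ?W"
    show "min (s1 * t2) (s2 * t1) \<le> card {q \<in> ?W. dprod_edge E1 E2 p q}"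
    proof (cases "p \<in> A1 \<times> B2")
      case True
      have "s2 * t1 = card (B1 \<times> A2)" using k1 k2 by (simp add: card_cartesian_product)
      also have "\<dots> \<le> card {q \<in> ?W. dprod_edge E1 E2 p q}"
        using fin True k1 k2 by (intro card_mono) (auto simp: dprod_edge_def intro: sym2)
      finally show ?thesis by simp
    next
      case False
      then have pp: "p \<in> B1 \<times> A2" using p by auto
      have "s1 * t2 = card (A1 \<times> B2)" using k1 k2 by (simp add: card_cartesian_product)
      also have "\<dots> \<le> card {q \<in> ?W. dprod_edge E1 E2 p q}"
        using fin pp k1 k2 by (intro card_mono) (auto simp: dprod_edge_def intro: sym1)
      finally show ?thesis by simp
    qed
  qed
qed

lemma lb_D:
  assumes G1: "graph V1 E1" and G2: "graph V2 E2" and ne: "V1 \<noteq> {}" "V2 \<noteq> {}"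
  shows "min (max_degree V1 E1) (max_degree V2 E2) \<le> degeneracy (V1 \<times> V2) (dprod_edge E1 E2)"
proof (cases "min (max_degree V1 E1) (max_degree V2 E2) = 0")
  case True then show ?thesis by simp
next
  case False
  have fV: "finite V1" "finite V2" using G1 G2 unfolding graph_def by auto
  obtain v where v: "v \<in> V1" "degree V1 E1 v = max_degree V1 E1"
    unfolding max_degree_def using fV ne by (metis (mono_tags, lifting) Max_in empty_is_image finite_imageI imageE)
  obtain u where u: "u \<in> V2" "degree V2 E2 u = max_degree V2 E2"
    unfolding max_degree_def using fV ne by (metis (mono_tags, lifting) Max_in empty_is_image finite_imageI imageE)
  define N1 where "N1 = {y \<in> V1. E1 v y}"
  define N2 where "N2 = {y \<in> V2. E2 u y}"
  have c: "card N1 = max_degree V1 E1" "card N2 = max_degree V2 E2"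
    using v u unfolding N1_def N2_def degree_def by auto
  have fN: "finite N1" "finite N2" using fV unfolding N1_def N2_def by auto
  have ne2: "N1 \<noteq> {}" "N2 \<noteq> {}" using c False by auto
  have sym1: "\<And>a b. E1 a b \<Longrightarrow> E1 b a" and sym2: "\<And>a b. E2 a b \<Longrightarrow> E2 b a"
    using G1 G2 unfolding graph_def by auto
  let ?W = "{v} \<times> N2 \<union> N1 \<times> {u}"
  show ?thesis
  proof (rule lb_induced[OF graph_prod[OF G1 G2]])
    show "?W \<subseteq> V1 \<times> V2" using v u unfolding N1_def N2_def by auto
    show "?W \<noteq> {}" using ne2 by auto
    fix p assume p: "p \<in> ?W"
    show "min (max_degree V1 E1) (max_degree V2 E2) \<le> card {q \<in> ?W. dprod_edge E1 E2 p q}"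
    proof (cases "p \<in> {v} \<times> N2")
      case True
      have "max_degree V1 E1 = card (N1 \<times> {u})" using c by (simp add: card_cartesian_product)
      also have "\<dots> \<le> card {q \<in> ?W. dprod_edge E1 E2 p q}"
        using fN True by (intro card_mono) (auto simp: dprod_edge_def N1_def N2_def intro: sym2)
      finally show ?thesis by simp
    next
      case False
      then have pp: "p \<in> N1 \<times> {u}" using p by auto
      have "max_degree V2 E2 = card ({v} \<times> N2)" using c by (simp add: card_cartesian_product)
      also have "\<dots> \<le> card {q \<in> ?W. dprod_edge E1 E2 p q}"
        using fN pp by (intro card_mono) (auto simp: dprod_edge_def N1_def N2_def intro: sym1)
      finally show ?thesis by simp
    qed
  qed
qed

theorem mainTheorem5:
  fixes V1 :: "'a set" and E1 :: "'a \<Rightarrow> 'a \<Rightarrow> bool"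
    and V2 :: "'b set" and E2 :: "'b \<Rightarrow> 'b \<Rightarrow> bool"
    and s1 t1 s2 t2 :: nat
  assumes G1: "graph V1 E1" and G2: "graph V2 E2"
    and st1: "1 \<le> s1" "s1 \<le> t1" and st2: "1 \<le> s2" "s2 \<le> t2"
    and K1: "contains_Kst V1 E1 s1 t1" and K2: "contains_Kst V2 E2 s2 t2"
  shows "max (degeneracy V1 E1 * degeneracy V2 E2)
             (max (min (s1 * t2) (s2 * t1)) (min (max_degree V1 E1) (max_degree V2 E2)))
           \<le> degeneracy (V1 \<times> V2) (dprod_edge E1 E2)
       \<and> degeneracy (V1 \<times> V2) (dprod_edge E1 E2)
           \<le> min (degeneracy V1 E1 * max_degree V2 E2) (degeneracy V2 E2 * max_degree V1 E1)"
proof -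
  have ne: "V1 \<noteq> {}" "V2 \<noteq> {}" using K1 K2 st1 st2 unfolding contains_Kst_def by force+
  show ?thesis using lb_prod[OF G1 G2] lb_K[OF G1 G2 st1 st2 K1 K2] lb_D[OF G1 G2 ne]
      ub_fst[OF G1 G2] ub_snd[OF G1 G2] by simp
qed

end
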